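(* Let $G$ be an abelian, second countable, locally compact group with Haar measure $\mu$, let $K\subset G$ be a Borel set which is a semigroup, and assume there is a F\o lner sequence $(\Lambda_n)$ in $G$ with $\Lambda_n\subset K$ for all $n$. Let $\Sigma$ be the $\sigma$-algebra of Borel subsets of $G$ contained in $K$, and let $E\in\Sigma$ be relatively dense in $K$. Then: (1) There exist $r\in\mathbb{N}$ and $g_1,\dots,g_r\in K$ such that for each $B\in\Sigma$ with $\mu(B)<\infty$ there is $j\in\{1,\dots,r\}$ with $\mu((Bg_j)\cap E)\ge\mu(B)/r$. (2) $E$ has positive lower density relative to some F\o lner sequence $(\Lambda'_n)$ in $G$ with $\Lambda'_n\subset K$ for all $n$. (3) If $f:K\to\mathbb{R}$ is $\Sigma$-measurable with $f\ge0$ and $f(g)\ge\alpha$ for some $\alpha>0$ and all $g\in E$, then there exists a F\o lner sequence $(\Lambda'_n)$ in $G$ with $\Lambda'_n\subset K$ for all $n$ such that $\liminf_{n\to\infty}\frac{1}{\mu(\Lambda'_n)}\int_{\Lambda'_n}f\,d\mu>0$.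
   Context: A F\o lner sequence in $G$ is a sequence $(\Lambda_n)$ of compact subsets with $\mu(\Lambda_n)>0$ and $\lim_n\mu(\Lambda_n\,\Delta\,(\Lambda_ng))/\mu(\Lambda_n)=0$ for all $g\in G$. A set $E\subset K$ is relatively dense in $K$ if there exist $r\in\mathbb{N}$ and $g_1,\dots,g_r\in K$ with $E\cap\{gg_1,\dots,gg_r\}\neq\varnothing$ for all $g\in K$. $Bg=\{bg:b\in B\}$. A set $V\in\Sigma$ has positive lower density relative to $(\Lambda'_n)$ if $\liminf_{n\to\infty}\mu(\Lambda'_n\cap V)/\mu(\Lambda'_n)>0$. *)

theory Defs
  imports "HOL-Analysis.Analysis"
begin

text \<open>The abelian group G is written additively: the product b g of the paper is b + g.\<close>

definition haar_measure :: "'a::topological_ab_group_add measure \<Rightarrow> bool" where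
  "haar_measure \<mu> \<longleftrightarrow>
     sets \<mu> = sets borel \<and>
     (\<forall>A\<in>sets borel. \<forall>g. emeasure \<mu> ((\<lambda>b. b + g) ` A) = emeasure \<mu> A) \<and>
     (\<forall>C. compact C \<longrightarrow> emeasure \<mu> C < \<infinity>) \<and>
     (\<forall>U. open U \<and> U \<noteq> {} \<longrightarrow> emeasure \<mu> U > 0) \<and>
     (\<forall>A\<in>sets borel. emeasure \<mu> A = (INF U\<in>{U. open U \<and> A \<subseteq> U}. emeasure \<mu> U)) \<and>
     (\<forall>U. open U \<longrightarrow> emeasure \<mu> U = (SUP C\<in>{C. compact C \<and> C \<subseteq> U}. emeasure \<mu> C))"

definition folner_seq :: "'a::topological_ab_group_add measure \<Rightarrow> (nat \<Rightarrow> 'a set) \<Rightarrow> bool" where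
  "folner_seq \<mu> \<Lambda> \<longleftrightarrow>
     (\<forall>n. compact (\<Lambda> n) \<and> measure \<mu> (\<Lambda> n) > 0) \<and>
     (\<forall>g. (\<lambda>n. measure \<mu> ((\<Lambda> n - (\<lambda>b. b + g) ` \<Lambda> n) \<union> ((\<lambda>b. b + g) ` \<Lambda> n - \<Lambda> n)) / measure \<mu> (\<Lambda> n))
            \<longlonglongrightarrow> 0)"

definition rel_dense_in :: "'a::plus set \<Rightarrow> 'a set \<Rightarrow> bool" where
  "rel_dense_in E K \<longleftrightarrow>
     (\<exists>(r::nat) (gs::nat \<Rightarrow> 'a). (\<forall>i\<in>{1..r}. gs i \<in> K) \<and>
        (\<forall>g\<in>K. E \<inter> {g + gs i | i. i \<in> {1..r}} \<noteq> {}))"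

end

theory Submission
  imports Defs
begin

lemma trans_eq_vimage:
  fixes g :: "'a::ab_group_add"
  shows "(\<lambda>b. b + g) ` A = (\<lambda>b. b - g) -` A"
  by (auto simp: image_iff) (metis diff_add_cancel)

lemma trans_borel:
  fixes g :: "'a::{topological_ab_group_add}"
  assumes "A \<in> sets borel"
  shows "(\<lambda>b. b + g) ` A \<in> sets borel"
proof -
  have m: "(\<lambda>b. b - g) \<in> borel_measurable borel"
    by (intro borel_measurable_continuous_onI continuous_intros)
  have "(\<lambda>b. b - g) -` A \<inter> space borel \<in> sets borel"
    using measurable_sets[OF m assms] .
  thus ?thesis by (simp add: trans_eq_vimage)
qed

lemma haar_trans_measure:
  assumes "haar_measure \<mu>" "A \<in> sets borel"
  shows "measure \<mu> ((\<lambda>b. b + g) ` A) = measure \<mu> A"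
  using assms unfolding haar_measure_def measure_def by simp

lemma haar_trans_emeasure:
  assumes "haar_measure \<mu>" "A \<in> sets borel"
  shows "emeasure \<mu> ((\<lambda>b. b + g) ` A) = emeasure \<mu> A"
  using assms unfolding haar_measure_def by simp

lemma symdiff_trans:
  fixes h g :: "'a::ab_group_add"
  shows "((\<lambda>b. b + h) ` L - (\<lambda>b. b + g) ` ((\<lambda>b. b + h) ` L)) \<union> ((\<lambda>b. b + g) ` ((\<lambda>b. b + h) ` L) - (\<lambda>b. b + h) ` L)
     = (\<lambda>b. b + h) ` ((L - (\<lambda>b. b + g) ` L) \<union> ((\<lambda>b. b + g) ` L - L))"
proof -
  have inj: "inj (\<lambda>b::'a. b + h)" by (simp add: inj_def)
  have c: "(\<lambda>b. b + g) ` ((\<lambda>b. b + h) ` L) = (\<lambda>b. b + h) ` ((\<lambda>b. b + g) ` L)"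
    by (simp add: image_image algebra_simps)
  show ?thesis unfolding c image_Un image_set_diff[OF inj] ..
qed

lemma folner_trans:
  fixes \<mu> :: "'a::{topological_ab_group_add, t2_space} measure"
  assumes haar: "haar_measure \<mu>" and F: "folner_seq \<mu> \<Lambda>"
  shows "folner_seq \<mu> (\<lambda>n. (\<lambda>b. b + h n) ` \<Lambda> n)"
proof -
  have cpt: "compact (\<Lambda> n)" and pos: "measure \<mu> (\<Lambda> n) > 0" for n
    using F unfolding folner_seq_def by auto
  have bor: "\<Lambda> n \<in> sets borel" for n using cpt[of n] by (simp add: compact_imp_closed borel_closed)
  have "compact ((\<lambda>b. b + h n) ` \<Lambda> n)" for n
    by (intro compact_continuous_image cpt continuous_intros)
  moreover have m: "measure \<mu> ((\<lambda>b. b + h n) ` \<Lambda> n) = measure \<mu> (\<Lambda> n)" for n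
    using haar_trans_measure[OF haar bor] .
  moreover have "(\<lambda>n. measure \<mu> (((\<lambda>b. b + h n) ` \<Lambda> n - (\<lambda>b. b + g) ` ((\<lambda>b. b + h n) ` \<Lambda> n)) \<union> ((\<lambda>b. b + g) ` ((\<lambda>b. b + h n) ` \<Lambda> n) - (\<lambda>b. b + h n) ` \<Lambda> n)) / measure \<mu> ((\<lambda>b. b + h n) ` \<Lambda> n))
            \<longlonglongrightarrow> 0" for g
  proof -
    have sb: "(\<Lambda> n - (\<lambda>b. b + g) ` \<Lambda> n) \<union> ((\<lambda>b. b + g) ` \<Lambda> n - \<Lambda> n) \<in> sets borel" for n
      using bor[of n] trans_borel[OF bor[of n], of g] by auto
    have "(\<lambda>n. measure \<mu> (((\<lambda>b. b + h n) ` \<Lambda> n - (\<lambda>b. b + g) ` ((\<lambda>b. b + h n) ` \<Lambda> n)) \<union> ((\<lambda>b. b + g) ` ((\<lambda>b. b + h n) ` \<Lambda> n) - (\<lambda>b. b + h n) ` \<Lambda> n)) / measure \<mu> ((\<lambda>b. b + h n) ` \<Lambda> n))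
       = (\<lambda>n. measure \<mu> ((\<Lambda> n - (\<lambda>b. b + g) ` \<Lambda> n) \<union> ((\<lambda>b. b + g) ` \<Lambda> n - \<Lambda> n)) / measure \<mu> (\<Lambda> n))"
      unfolding symdiff_trans m haar_trans_measure[OF haar sb] ..
    thus ?thesis using F unfolding folner_seq_def by simp
  qed
  ultimately show ?thesis using pos unfolding folner_seq_def by simp
qed

lemma part1:
  fixes \<mu> :: "'a::{topological_ab_group_add, t2_space} measure"
  assumes haar: "haar_measure \<mu>" and Kne: "K \<noteq> {}"
    and E_Sigma: "E \<in> sets borel" and E_dense: "rel_dense_in E K"
  obtains r gs where "r \<ge> 1" "\<forall>i\<in>{1..r}. gs i \<in> K"
    "\<And>B. B \<in> sets borel \<Longrightarrow> B \<subseteq> K \<Longrightarrow>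
       \<exists>j\<in>{1..r}. measure \<mu> (((\<lambda>b. b + gs j) ` B) \<inter> E) \<ge> measure \<mu> B / real r"
proof -
  obtain r :: nat and gs where gsK: "\<forall>i\<in>{1..r}. gs i \<in> K"
    and cov: "\<forall>g\<in>K. E \<inter> {g + gs i | i. i \<in> {1..r}} \<noteq> {}"
    using E_dense unfolding rel_dense_in_def by blast
  have r1: "r \<ge> 1" using cov Kne by fastforce
  have main: "\<exists>j\<in>{1..r}. measure \<mu> (((\<lambda>b. b + gs j) ` B) \<inter> E) \<ge> measure \<mu> B / real r"
    if B: "B \<in> sets borel" "B \<subseteq> K" for B
  proof -
    define D where "D i = B \<inter> (\<lambda>b. b + gs i) -` E" for i
    have vim: "(\<lambda>b. b + gs i) -` E = (\<lambda>b. b + (- gs i)) ` E" for i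
      using trans_eq_vimage[of "- gs i" E] by simp
    have Db: "D i \<in> sets borel" for i
      unfolding D_def vim by (intro sets.Int B(1) trans_borel E_Sigma)
    have tD: "(\<lambda>b. b + gs i) ` D i = ((\<lambda>b. b + gs i) ` B) \<inter> E" for i
      unfolding D_def by auto
    have BU: "B = (\<Union>i\<in>{1..r}. D i)"
    proof
      show "B \<subseteq> (\<Union>i\<in>{1..r}. D i)"
      proof
        fix x assume "x \<in> B"
        hence "x \<in> K" using B(2) by auto
        then obtain i where "i \<in> {1..r}" "x + gs i \<in> E" using cov by blast
        thus "x \<in> (\<Union>i\<in>{1..r}. D i)" using \<open>x \<in> B\<close> unfolding D_def by auto
      qed
    qed (auto simp: D_def)
    have sets: "sets \<mu> = sets borel" using haar unfolding haar_measure_def by simp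
    have "measure \<mu> B \<le> (\<Sum>i\<in>{1..r}. measure \<mu> (D i))"
      by (subst BU, rule measure_UNION_le) (auto simp: sets Db)
    also have "\<dots> = (\<Sum>i\<in>{1..r}. measure \<mu> (((\<lambda>b. b + gs i) ` B) \<inter> E))"
      by (intro sum.cong refl) (simp add: tD[symmetric] haar_trans_measure[OF haar Db])
    finally have le: "measure \<mu> B \<le> (\<Sum>i\<in>{1..r}. measure \<mu> (((\<lambda>b. b + gs i) ` B) \<inter> E))" .
    show ?thesis
    proof (rule ccontr)
      assume "\<not> ?thesis"
      hence "\<forall>i\<in>{1..r}. measure \<mu> (((\<lambda>b. b + gs i) ` B) \<inter> E) < measure \<mu> B / real r" by auto
      hence "(\<Sum>i\<in>{1..r}. measure \<mu> (((\<lambda>b. b + gs i) ` B) \<inter> E)) < (\<Sum>i\<in>{1..r}. measure \<mu> B / real r)"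
        using r1 by (intro sum_strict_mono) auto
      also have "\<dots> = measure \<mu> B" using r1 by simp
      finally show False using le by simp
    qed
  qed
  show ?thesis using that r1 gsK main by blast
qed

theorem lemma5p12:
  fixes \<mu> :: "'a::{topological_ab_group_add, second_countable_topology, t2_space} measure"
    and K E :: "'a set"
  assumes lc: "locally_compact_space (euclidean :: 'a topology)"
    and haar: "haar_measure \<mu>"
    and K_borel: "K \<in> sets borel"
    and K_semigroup: "\<forall>x\<in>K. \<forall>y\<in>K. x + y \<in> K"
    and folner_ex: "\<exists>\<Lambda>. folner_seq \<mu> \<Lambda> \<and> (\<forall>n. \<Lambda> n \<subseteq> K)"
    and E_Sigma: "E \<in> sets borel" "E \<subseteq> K"
    and E_dense: "rel_dense_in E K"
  shows
    "(\<exists>(r::nat) (gs::nat \<Rightarrow> 'a). (\<forall>i\<in>{1..r}. gs i \<in> K) \<and>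
        (\<forall>B. B \<in> sets borel \<and> B \<subseteq> K \<and> emeasure \<mu> B < \<infinity> \<longrightarrow>
           (\<exists>j\<in>{1..r}. measure \<mu> (((\<lambda>b. b + gs j) ` B) \<inter> E) \<ge> measure \<mu> B / real r)))
     \<and> (\<exists>\<Lambda>'. folner_seq \<mu> \<Lambda>' \<and> (\<forall>n. \<Lambda>' n \<subseteq> K) \<and>
          liminf (\<lambda>n. emeasure \<mu> (\<Lambda>' n \<inter> E) / emeasure \<mu> (\<Lambda>' n)) > 0)
     \<and> (\<forall>(f::'a \<Rightarrow> real) (\<alpha>::real).
          f \<in> borel_measurable (restrict_space borel K) \<and> (\<forall>g\<in>K. f g \<ge> 0) \<and>
          \<alpha> > 0 \<and> (\<forall>g\<in>E. f g \<ge> \<alpha>) \<longrightarrow>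
          (\<exists>\<Lambda>'. folner_seq \<mu> \<Lambda>' \<and> (\<forall>n. \<Lambda>' n \<subseteq> K) \<and>
             liminf (\<lambda>n. (\<integral>\<^sup>+ x\<in>\<Lambda>' n. ennreal (f x) \<partial>\<mu>) / emeasure \<mu> (\<Lambda>' n)) > 0))"
proof -
  obtain \<Lambda> where F: "folner_seq \<mu> \<Lambda>" and LK: "\<forall>n. \<Lambda> n \<subseteq> K" using folner_ex by blast
  have cpt: "compact (\<Lambda> n)" and pos: "measure \<mu> (\<Lambda> n) > 0" for n
    using F unfolding folner_seq_def by auto
  have Lne: "\<Lambda> n \<noteq> {}" for n using pos[of n] by auto
  have Kne: "K \<noteq> {}" using Lne[of 0] LK by auto
  have bor: "\<Lambda> n \<in> sets borel" for n using cpt[of n] by (simp add: compact_imp_closed borel_closed)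
  obtain r gs where r1: "r \<ge> 1" and gsK: "\<forall>i\<in>{1..r}. gs i \<in> K"
    and P: "\<And>B. B \<in> sets borel \<Longrightarrow> B \<subseteq> K \<Longrightarrow>
       \<exists>j\<in>{1..r}. measure \<mu> (((\<lambda>b. b + gs j) ` B) \<inter> E) \<ge> measure \<mu> B / real r"
    using part1[OF haar Kne E_Sigma(1) E_dense] by blast
  have A1: "\<exists>(r::nat) (gs::nat \<Rightarrow> 'a). (\<forall>i\<in>{1..r}. gs i \<in> K) \<and>
        (\<forall>B. B \<in> sets borel \<and> B \<subseteq> K \<and> emeasure \<mu> B < \<infinity> \<longrightarrow>
           (\<exists>j\<in>{1..r}. measure \<mu> (((\<lambda>b. b + gs j) ` B) \<inter> E) \<ge> measure \<mu> B / real r))"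
    using gsK P by blast
  have "\<forall>n. \<exists>j\<in>{1..r}. measure \<mu> (((\<lambda>b. b + gs j) ` \<Lambda> n) \<inter> E) \<ge> measure \<mu> (\<Lambda> n) / real r"
    using P bor LK by blast
  then obtain j where j: "\<And>n. j n \<in> {1..r}"
    and jle: "\<And>n. measure \<mu> (((\<lambda>b. b + gs (j n)) ` \<Lambda> n) \<inter> E) \<ge> measure \<mu> (\<Lambda> n) / real r"
    by metis
  define L where "L n = (\<lambda>b. b + gs (j n)) ` \<Lambda> n" for n
  have FL: "folner_seq \<mu> L" unfolding L_def by (rule folner_trans[OF haar F])
  have LKK: "\<forall>n. L n \<subseteq> K" unfolding L_def using LK gsK j K_semigroup by blast
  have Lb: "L n \<in> sets borel" for n unfolding L_def by (rule trans_borel[OF bor])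
  have mL: "measure \<mu> (L n) = measure \<mu> (\<Lambda> n)" for n
    unfolding L_def by (rule haar_trans_measure[OF haar bor])
  have cL: "compact (L n)" for n using FL unfolding folner_seq_def by auto
  have finL: "emeasure \<mu> (L n) < \<infinity>" for n using haar cL unfolding haar_measure_def by auto
  have sets: "sets \<mu> = sets borel" using haar unfolding haar_measure_def by simp
  have finLE: "emeasure \<mu> (L n \<inter> E) < \<infinity>" for n
    using emeasure_mono[of "L n \<inter> E" "L n" \<mu>] finL[of n] Lb[of n] sets by auto
  have ratio: "ennreal (1 / real r) \<le> emeasure \<mu> (L n \<inter> E) / emeasure \<mu> (L n)" for n
  proof -
    have e1: "emeasure \<mu> (L n) = ennreal (measure \<mu> (L n))"
      using finL[of n] by (simp add: emeasure_eq_ennreal_measure)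
    have e2: "emeasure \<mu> (L n \<inter> E) = ennreal (measure \<mu> (L n \<inter> E))"
      using finLE[of n] by (simp add: emeasure_eq_ennreal_measure)
    have p: "measure \<mu> (L n) > 0" using mL pos by simp
    have "measure \<mu> (L n \<inter> E) \<ge> measure \<mu> (L n) / real r" using jle[of n] mL[of n] unfolding L_def by simp
    hence "1 / real r \<le> measure \<mu> (L n \<inter> E) / measure \<mu> (L n)"
      using p r1 by (simp add: field_simps)
    thus ?thesis unfolding e1 e2 by (subst divide_ennreal) (use p in auto)
  qed
  have rpos: "0 < ennreal (1 / real r)" using r1 by simp
  have A2: "\<exists>\<Lambda>'. folner_seq \<mu> \<Lambda>' \<and> (\<forall>n. \<Lambda>' n \<subseteq> K) \<and>
          liminf (\<lambda>n. emeasure \<mu> (\<Lambda>' n \<inter> E) / emeasure \<mu> (\<Lambda>' n)) > 0"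
  proof (intro exI conjI)
    show "0 < liminf (\<lambda>n. emeasure \<mu> (L n \<inter> E) / emeasure \<mu> (L n))"
    proof -
      have "ennreal (1 / real r) \<le> liminf (\<lambda>n. emeasure \<mu> (L n \<inter> E) / emeasure \<mu> (L n))"
        by (rule Liminf_bounded) (simp add: ratio)
      thus ?thesis using rpos by order
    qed
  qed (use FL LKK in auto)
  have A3: "\<forall>(f::'a \<Rightarrow> real) (\<alpha>::real).
          f \<in> borel_measurable (restrict_space borel K) \<and> (\<forall>g\<in>K. f g \<ge> 0) \<and>
          \<alpha> > 0 \<and> (\<forall>g\<in>E. f g \<ge> \<alpha>) \<longrightarrow>
          (\<exists>\<Lambda>'. folner_seq \<mu> \<Lambda>' \<and> (\<forall>n. \<Lambda>' n \<subseteq> K) \<and>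
             liminf (\<lambda>n. (\<integral>\<^sup>+ x\<in>\<Lambda>' n. ennreal (f x) \<partial>\<mu>) / emeasure \<mu> (\<Lambda>' n)) > 0)"
  proof (intro allI impI)
    fix f :: "'a \<Rightarrow> real" and \<alpha> :: real
    assume H: "f \<in> borel_measurable (restrict_space borel K) \<and> (\<forall>g\<in>K. f g \<ge> 0) \<and>
          \<alpha> > 0 \<and> (\<forall>g\<in>E. f g \<ge> \<alpha>)"
    have bnd: "ennreal (\<alpha> * (1 / real r)) \<le> (\<integral>\<^sup>+ x\<in>L n. ennreal (f x) \<partial>\<mu>) / emeasure \<mu> (L n)" for n
    proof -
      have "ennreal \<alpha> * emeasure \<mu> (L n \<inter> E) = (\<integral>\<^sup>+ x. ennreal \<alpha> * indicator (L n \<inter> E) x \<partial>\<mu>)"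
        using Lb[of n] E_Sigma(1) sets by (subst nn_integral_cmult_indicator) auto
      also have "\<dots> \<le> (\<integral>\<^sup>+ x\<in>L n. ennreal (f x) \<partial>\<mu>)"
        by (intro nn_integral_mono) (use H in \<open>auto split: split_indicator intro: ennreal_leI\<close>)
      finally have i: "ennreal \<alpha> * emeasure \<mu> (L n \<inter> E) \<le> (\<integral>\<^sup>+ x\<in>L n. ennreal (f x) \<partial>\<mu>)" .
      have "ennreal (\<alpha> * (1 / real r)) = ennreal \<alpha> * ennreal (1 / real r)"
        using H by (subst ennreal_mult) auto
      also have "\<dots> \<le> ennreal \<alpha> * (emeasure \<mu> (L n \<inter> E) / emeasure \<mu> (L n))"
        by (intro mult_left_mono ratio) auto
      also have "\<dots> = ennreal \<alpha> * emeasure \<mu> (L n \<inter> E) / emeasure \<mu> (L n)"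
        by (rule ennreal_times_divide)
      also have "\<dots> \<le> (\<integral>\<^sup>+ x\<in>L n. ennreal (f x) \<partial>\<mu>) / emeasure \<mu> (L n)"
        by (rule divide_right_mono_ennreal[OF i])
      finally show ?thesis .
    qed
    have apos: "0 < ennreal (\<alpha> * (1 / real r))" using H r1 by simp
    show "\<exists>\<Lambda>'. folner_seq \<mu> \<Lambda>' \<and> (\<forall>n. \<Lambda>' n \<subseteq> K) \<and>
             liminf (\<lambda>n. (\<integral>\<^sup>+ x\<in>\<Lambda>' n. ennreal (f x) \<partial>\<mu>) / emeasure \<mu> (\<Lambda>' n)) > 0"
    proof (intro exI conjI)
      show "0 < liminf (\<lambda>n. (\<integral>\<^sup>+ x\<in>L n. ennreal (f x) \<partial>\<mu>) / emeasure \<mu> (L n))"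
      proof -
        have "ennreal (\<alpha> * (1 / real r)) \<le> liminf (\<lambda>n. (\<integral>\<^sup>+ x\<in>L n. ennreal (f x) \<partial>\<mu>) / emeasure \<mu> (L n))"
          by (rule Liminf_bounded, rule always_eventually, rule allI, rule bnd)
        thus ?thesis using apos by order
      qed
    qed (use FL LKK in auto)
  qed
  show ?thesis using A1 A2 A3 by blast
qed

end
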